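(* Let $G^\sigma$ be a connected oriented unicyclic graph of order $n$ with girth $k<n$, and let $C_k^\sigma$ be its cycle. (1) If $G^\sigma\in\mathscr{U}_1$, then $sr(G^\sigma)\leq n$ if $n$ is even and $sr(G^\sigma)\leq n-1$ if $n$ is odd. (2) If $G^\sigma\in\mathscr{U}_2$, then $sr(G^\sigma)\leq n-1$ if $n$ and $k$ are odd; $\leq n-2$ if $n$ is even and $k$ is odd; $\leq n$ if $n$ is even and $C_k^\sigma$ is oddly-oriented; $\leq n-1$ if $n$ is odd and $C_k^\sigma$ is oddly-oriented; $\leq n-2$ if $n$ is even and $C_k^\sigma$ is evenly-oriented; $\leq n-3$ if $n$ is odd and $C_k^\sigma$ is evenly-oriented.
   Context: An oriented graph $G^\sigma$ is a simple graph with an orientation of each edge. Its skew-adjacency matrix $S(G^\sigma)=(s_{ij})$ has $s_{ij}=1$ if there is an arc from $v_i$ to $v_j$, $s_{ij}=-1$ if there is an arc from $v_j$ to $v_i$, and $0$ otherwise; $sr(G^\sigma)$ is its rank. For an even cycle $u_1\cdots u_ku_1$, its sign is the sign of $\prod_{i=1}^k s_{u_iu_{i+1}}$ ($u_{k+1}=u_1$); it is evenly-oriented if the sign is positive, oddly-oriented if negative. A $\delta$-transformation deletes a pendant vertex (a vertex of degree one) together with its unique neighbor and all incident edges. $\mathscr{U}_1$ is the set of oriented unicyclic graphs of order $n$ with girth $k$ that can be transformed into a graph without edges by finitely many $\delta$-transformations; $\mathscr{U}_2$ is the set of those that can be transformed into the oriented cycle $C_k^\sigma$, or the disjoint union of $C_k^\sigma$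 with isolated vertices, by finitely many $\delta$-transformations. *)

theory Defs
  imports "HOL-Analysis.Analysis"
begin

definition oriented_graph :: "('n \<Rightarrow> 'n \<Rightarrow> bool) \<Rightarrow> bool" where
  "oriented_graph D \<longleftrightarrow> (\<forall>u. \<not> D u u) \<and> (\<forall>u v. \<not> (D u v \<and> D v u))"

definition adj :: "('n \<Rightarrow> 'n \<Rightarrow> bool) \<Rightarrow> 'n \<Rightarrow> 'n \<Rightarrow> bool" where
  "adj D u v \<longleftrightarrow> D u v \<or> D v u"

definition skew_adj :: "('n::finite \<Rightarrow> 'n \<Rightarrow> bool) \<Rightarrow> real^'n^'n" where
  "skew_adj D = (\<chi> i j. if D i j then 1 else if D j i then -1 else 0)"

definition sr :: "('n::finite \<Rightarrow> 'n \<Rightarrow> bool) \<Rightarrow> nat" where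
  "sr D = rank (skew_adj D)"

definition connected_graph :: "('n \<Rightarrow> 'n \<Rightarrow> bool) \<Rightarrow> bool" where
  "connected_graph D \<longleftrightarrow> (\<forall>u v. (adj D)\<^sup>*\<^sup>* u v)"

definition is_cycle :: "('n \<Rightarrow> 'n \<Rightarrow> bool) \<Rightarrow> 'n list \<Rightarrow> bool" where
  "is_cycle D cs \<longleftrightarrow> length cs \<ge> 3 \<and> distinct cs \<and>
     (\<forall>i < length cs. adj D (cs ! i) (cs ! ((i + 1) mod length cs)))"

definition cycle_edges :: "'n list \<Rightarrow> 'n set set" where
  "cycle_edges cs = {{cs ! i, cs ! ((i + 1) mod length cs)} | i. i < length cs}"

definition unicyclic :: "('n \<Rightarrow> 'n \<Rightarrow> bool) \<Rightarrow> bool" where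
  "unicyclic D \<longleftrightarrow> connected_graph D \<and> (\<exists>cs. is_cycle D cs) \<and>
     (\<forall>cs cs'. is_cycle D cs \<longrightarrow> is_cycle D cs' \<longrightarrow> cycle_edges cs = cycle_edges cs')"

definition evenly_oriented :: "('n::finite \<Rightarrow> 'n \<Rightarrow> bool) \<Rightarrow> 'n list \<Rightarrow> bool" where
  "evenly_oriented D cs \<longleftrightarrow>
     (\<Prod>i<length cs. skew_adj D $ (cs ! i) $ (cs ! ((i + 1) mod length cs))) > 0"

definition oddly_oriented :: "('n::finite \<Rightarrow> 'n \<Rightarrow> bool) \<Rightarrow> 'n list \<Rightarrow> bool" where
  "oddly_oriented D cs \<longleftrightarrow>
     (\<Prod>i<length cs. skew_adj D $ (cs ! i) $ (cs ! ((i + 1) mod length cs))) < 0"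

definition delta_step :: "('n \<Rightarrow> 'n \<Rightarrow> bool) \<Rightarrow> 'n set \<Rightarrow> 'n set \<Rightarrow> bool" where
  "delta_step D V V' \<longleftrightarrow>
     (\<exists>u v. u \<in> V \<and> {w \<in> V. adj D u w} = {v} \<and> V' = V - {u, v})"

definition in_U1 :: "('n \<Rightarrow> 'n \<Rightarrow> bool) \<Rightarrow> bool" where
  "in_U1 D \<longleftrightarrow> (\<exists>V'. (delta_step D)\<^sup>*\<^sup>* UNIV V' \<and>
     (\<forall>u\<in>V'. \<forall>v\<in>V'. \<not> adj D u v))"

definition in_U2 :: "('n \<Rightarrow> 'n \<Rightarrow> bool) \<Rightarrow> 'n list \<Rightarrow> bool" where
  "in_U2 D cs \<longleftrightarrow> (\<exists>V'. (delta_step D)\<^sup>*\<^sup>* UNIV V' \<and> set cs \<subseteq> V' \<and>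
     (\<forall>u\<in>V'. \<forall>v\<in>V'. adj D u v \<longrightarrow> u \<in> set cs \<and> v \<in> set cs))"

end

theory Submission
  imports Defs
begin


lemma skew_entry: "skew_adj D $ i $ j = (if D i j then 1 else if D j i then -1 else 0)"
  by (simp add: skew_adj_def)

lemma skew_anti: "oriented_graph D \<Longrightarrow> skew_adj D $ j $ i = - skew_adj D $ i $ j"
  by (auto simp: skew_entry oriented_graph_def)

lemma skew_nadj: "\<not> adj D i j \<Longrightarrow> skew_adj D $ i $ j = 0"
  by (auto simp: skew_entry adj_def)

lemma skew_adj_sq: "oriented_graph D \<Longrightarrow> adj D i j \<Longrightarrow> skew_adj D $ i $ j * skew_adj D $ i $ j = 1"
  by (auto simp: skew_entry adj_def oriented_graph_def)

lemma adj_sym: "adj D i j = adj D j i" by (auto simp: adj_def)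

lemma adj_irrefl: "oriented_graph D \<Longrightarrow> \<not> adj D i i"
  by (auto simp: adj_def oriented_graph_def)

definition Msub :: "('n::finite \<Rightarrow> 'n \<Rightarrow> bool) \<Rightarrow> 'n set \<Rightarrow> real^'n^'n" where
  "Msub D V = (\<chi> i j. if i \<in> V \<and> j \<in> V then skew_adj D $ i $ j else 0)"

lemma Msub_UNIV: "Msub D UNIV = skew_adj D"
  by (simp add: Msub_def vec_eq_iff)

lemma delta_rank:
  fixes D :: "'n::finite \<Rightarrow> 'n \<Rightarrow> bool"
  assumes og: "oriented_graph D" and ds: "delta_step D V V'"
  shows "rank (Msub D V) \<le> rank (Msub D V') + 2 \<and> card V' + 2 = card V"
proof -
  obtain u v where u: "u \<in> V" and nb: "{w \<in> V. adj D u w} = {v}" and V': "V' = V - {u, v}"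
    using ds by (auto simp: delta_step_def)
  have v: "v \<in> V" "adj D u v" using nb by auto
  have uv: "u \<noteq> v" using v(2) adj_irrefl[OF og] by metis
  have nadj: "\<And>w. w \<in> V \<Longrightarrow> w \<noteq> v \<Longrightarrow> \<not> adj D u w" using nb by auto
  have c2: "card {u, v} \<le> card V" by (rule card_mono) (use u v in auto)
  have card: "card V' + 2 = card V"
    using u v uv V' c2 by (simp add: card_Diff_subset)
  define p where "p = column v (Msub D V)"
  define e :: "real^'n" where "e = axis v 1"
  let ?S = "insert p (insert e (columns (Msub D V')))"
  have sub: "columns (Msub D V) \<subseteq> span ?S"
  proof
    fix c assume "c \<in> columns (Msub D V)"
    then obtain w where c: "c = column w (Msub D V)" by (auto simp: columns_def)
    show "c \<in> span ?S"
    proof (cases "w = v")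
      case True then show ?thesis using c p_def by (simp add: span_base)
    next
      case wv: False
      show ?thesis
      proof (cases "w \<in> V")
        case False
        then have "c = 0" using c by (simp add: column_def Msub_def vec_eq_iff)
        then show ?thesis by (simp add: span_zero)
      next
        case wV: True
        show ?thesis
        proof (cases "w = u")
          case True
          have "c = skew_adj D $ v $ u *\<^sub>R e"
            unfolding c e_def True
            using u v nadj skew_nadj[of D u] skew_anti[OF og, of u]
            by (auto simp: column_def Msub_def vec_eq_iff axis_def adj_sym)
          then show ?thesis by (simp add: span_base span_mul)
        next
          case wu: False
          have cw: "column w (Msub D V') \<in> columns (Msub D V')" by (auto simp: columns_def)
          have "c = column w (Msub D V') + skew_adj D $ v $ w *\<^sub>R e"
            unfolding c e_def V'
            using u v wV wu wv nadj[of w] skew_nadj[of D u w]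
            by (auto simp: column_def Msub_def vec_eq_iff axis_def)
          then show ?thesis using cw by (simp add: span_base span_mul span_add)
        qed
      qed
    qed
  qed
  have "rank (Msub D V) = dim (columns (Msub D V))" by (rule column_rank_def)
  also have "\<dots> \<le> dim ?S" using sub by (rule dim_mono)
  also have "\<dots> \<le> dim (columns (Msub D V')) + 2" by (simp add: dim_insert)
  also have "\<dots> = rank (Msub D V') + 2" by (simp add: column_rank_def)
  finally show ?thesis using card by simp
qed

lemma delta_star:
  fixes D :: "'n::finite \<Rightarrow> 'n \<Rightarrow> bool"
  assumes og: "oriented_graph D" and st: "(delta_step D)\<^sup>*\<^sup>* UNIV V'"
  shows "\<exists>t. card V' + 2 * t = CARD('n) \<and> sr D \<le> rank (Msub D V') + 2 * t"
  using st
proof (induction rule: rtranclp_induct)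
  case base
  then show ?case by (auto simp: sr_def Msub_UNIV)
next
  case (step y z)
  then obtain t where "card y + 2 * t = CARD('n)" "sr D \<le> rank (Msub D y) + 2 * t" by blast
  with delta_rank[OF og step(2)] show ?case
    by (intro exI[of _ "Suc t"]) auto
qed



lemma chord_aux:
  assumes uc: "unicyclic D" and cy: "is_cycle D cs" and ij: "i < j" "j < length cs"
    and a: "adj D (cs!i) (cs!j)"
  shows "j = Suc i \<or> (i = 0 \<and> j = length cs - 1)"
proof (rule ccontr)
  assume nc: "\<not> (j = Suc i \<or> (i = 0 \<and> j = length cs - 1))"
  define k where "k = length cs"
  define L where "L = j - i + 1"
  define cs' where "cs' = take L (drop i cs)"
  have L3: "L \<ge> 3" using nc ij unfolding L_def by auto
  have lenc: "length cs' = L" using ij unfolding cs'_def L_def by auto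
  have nth': "\<And>l. l < L \<Longrightarrow> cs' ! l = cs ! (i + l)" using ij unfolding cs'_def L_def by auto
  have dcs: "distinct cs" using cy by (simp add: is_cycle_def)
  have cyc: "\<And>l. l < k \<Longrightarrow> adj D (cs ! l) (cs ! ((l + 1) mod k))"
    using cy by (simp add: is_cycle_def k_def)
  have "is_cycle D cs'"
    unfolding is_cycle_def
  proof (intro conjI allI impI)
    show "3 \<le> length cs'" using L3 lenc by simp
    show "distinct cs'" using dcs by (simp add: cs'_def)
    fix l assume l: "l < length cs'"
    show "adj D (cs' ! l) (cs' ! ((l + 1) mod length cs'))"
    proof (cases "l + 1 < L")
      case True
      have "adj D (cs ! (i+l)) (cs ! ((i + l + 1) mod k))" using cyc[of "i+l"] True ij
        unfolding L_def k_def by auto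
      moreover have "(i + l + 1) mod k = i + l + 1" using True ij unfolding L_def k_def by auto
      ultimately show ?thesis using True nth' lenc l by auto
    next
      case False
      then have "l = L - 1" using l lenc by auto
      then have "cs' ! l = cs ! j" "(l + 1) mod length cs' = 0" using nth'[of l] lenc L3 ij
        unfolding L_def by auto
      moreover have "cs' ! 0 = cs ! i" using nth'[of 0] L3 by simp
      moreover have "adj D (cs ! j) (cs ! i)" using a by (simp add: adj_sym)
      ultimately show ?thesis by simp
    qed
  qed
  then have ce: "cycle_edges cs' = cycle_edges cs" using uc cy unfolding unicyclic_def by blast
  have "{cs' ! (L - 1), cs' ! (((L-1) + 1) mod L)} \<in> cycle_edges cs'"
    unfolding cycle_edges_def lenc using L3 by (intro CollectI exI[of _ "L-1"]) simp
  moreover have "cs' ! (L - 1) = cs ! j" "cs' ! (((L-1) + 1) mod L) = cs ! i"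
    using nth' L3 ij unfolding L_def by auto
  ultimately have "{cs ! j, cs ! i} \<in> cycle_edges cs" using ce by simp
  then obtain m where m: "m < k" "{cs ! j, cs ! i} = {cs ! m, cs ! ((m + 1) mod k)}"
    unfolding cycle_edges_def k_def by blast
  have mk: "(m+1) mod k < k" using m by auto
  have ik: "i < k" "j < k" using ij unfolding k_def by auto
  from m(2) have "(cs!j = cs!m \<and> cs!i = cs!((m+1) mod k)) \<or> (cs!j = cs!((m+1) mod k) \<and> cs!i = cs!m)"
    by (auto simp: doubleton_eq_iff)
  moreover have "\<And>a b. a < k \<Longrightarrow> b < k \<Longrightarrow> cs!a = cs!b \<Longrightarrow> a = b"
    using nth_eq_iff_index_eq[OF dcs] unfolding k_def by blast
  ultimately have "(j = m \<and> i = (m+1) mod k) \<or> (j = (m+1) mod k \<and> i = m)"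
    using ik m(1) mk by blast
  then show False
  proof
    assume h: "j = m \<and> i = (m+1) mod k"
    show False
    proof (cases "m + 1 < k")
      case True then show False using h ij by auto
    next
      case False then have "m + 1 = k" using m by auto
      then show False using h nc ij unfolding k_def by auto
    qed
  next
    assume h: "j = (m+1) mod k \<and> i = m"
    show False
    proof (cases "m + 1 < k")
      case True then show False using h nc by auto
    next
      case False then have "m + 1 = k" using m by auto
      then show False using h ij by auto
    qed
  qed
qed

lemma chord:
  assumes uc: "unicyclic D" and cy: "is_cycle D cs" and ij: "i < length cs" "j < length cs"
    and a: "adj D (cs!i) (cs!j)" and og: "oriented_graph D"
  shows "j = (i + 1) mod length cs \<or> i = (j + 1) mod length cs"
proof -
  have "i \<noteq> j" using a adj_irrefl[OF og] by auto
  then consider "i < j" | "j < i" by linarith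
  then show ?thesis
  proof cases
    case 1
    have "j = Suc i \<or> (i = 0 \<and> j = length cs - 1)" using chord_aux[OF uc cy 1 ij(2) a] by simp
    then show ?thesis using ij 1 by (auto simp: mod_Suc)
  next
    case 2
    have "i = Suc j \<or> (j = 0 \<and> i = length cs - 1)" using chord_aux[OF uc cy 2 ij(1)] a adj_sym by metis
    then show ?thesis using ij 2 by (auto simp: mod_Suc)
  qed
qed



fun ff :: "(nat \<Rightarrow> real) \<Rightarrow> real \<Rightarrow> real \<Rightarrow> nat \<Rightarrow> real" where
  "ff s a b 0 = a"
| "ff s a b (Suc 0) = b"
| "ff s a b (Suc (Suc j)) = s j * s (Suc j) * ff s a b j"

lemma ff_even: "ff s a b (2*m) = (\<Prod>i<2*m. s i) * a"
  by (induction m) (auto simp: mult_ac)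

lemma ff_odd: "ff s a b (2*m+1) = (\<Prod>i<2*m. s (Suc i)) * b"
  by (induction m) (auto simp: mult_ac)

lemma sum2:
  assumes "finite S" "x \<in> S" "y \<in> S" "x \<noteq> y" "\<And>j. j \<in> S \<Longrightarrow> j \<noteq> x \<Longrightarrow> j \<noteq> y \<Longrightarrow> g j = 0"
  shows "sum g S = g x + g y"
proof -
  have "sum g S = sum g {x, y}"
    using assms by (intro sum.mono_neutral_right) auto
  then show ?thesis using assms(4) by simp
qed

locale cyc =
  fixes D :: "'n::finite \<Rightarrow> 'n \<Rightarrow> bool" and cs :: "'n list"
  assumes og: "oriented_graph D" and uc: "unicyclic D" and cy: "is_cycle D cs"
begin

abbreviation "k \<equiv> length cs"
abbreviation "A \<equiv> skew_adj D"
abbreviation "Mc \<equiv> Msub D (set cs)"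

definition s :: "nat \<Rightarrow> real" where
  "s j = A $ (cs ! (j mod k)) $ (cs ! ((j + 1) mod k))"

lemma k3: "k \<ge> 3" using cy by (simp add: is_cycle_def)
lemma k0: "k > 0" using k3 by (cases cs) auto
lemma cs_ne: "cs \<noteq> []" using k3 by (cases cs) auto
lemma modk: "j mod k < k" using k0 by simp
lemma sucmod: "Suc (j + k) mod k = Suc j mod k" by (metis add_Suc mod_add_self2)
lemma sucmod2: "Suc (Suc (j + k)) mod k = Suc (Suc j) mod k" by (metis add_Suc mod_add_self2)

lemma s_sq: "s j * s j = 1"
proof -
  have "j mod k < k" by (rule modk)
  then have "adj D (cs ! (j mod k)) (cs ! ((j mod k + 1) mod k))"
    using cy by (simp add: is_cycle_def)
  moreover have "(j mod k + 1) mod k = (j + 1) mod k" by (simp add: mod_Suc_eq)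
  ultimately show ?thesis unfolding s_def using skew_adj_sq[OF og] by simp
qed

lemma s_per: "s (j + k) = s j" "s (Suc (j + k)) = s (Suc j)"
  unfolding s_def by (simp_all add: sucmod sucmod2)

lemma ff_per:
  assumes "ff s a b k = a" "ff s a b (Suc k) = b"
  shows "ff s a b (j + k) = ff s a b j"
proof -
  have "ff s a b (j + k) = ff s a b j \<and> ff s a b (Suc j + k) = ff s a b (Suc j)"
  proof (induction j)
    case 0 then show ?case using assms by simp
  next
    case (Suc j)
    have "ff s a b (Suc (Suc j) + k) = s (j + k) * s (Suc (j + k)) * ff s a b (j + k)"
      by simp
    also have "\<dots> = ff s a b (Suc (Suc j))" using Suc s_per by simp
    finally show ?case using Suc by simp
  qed
  then show ?thesis by simp
qed

lemma ff_mod: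
  assumes "ff s a b k = a" "ff s a b (Suc k) = b"
  shows "ff s a b (j mod k) = ff s a b j"
proof -
  have q: "ff s a b (x + k * q) = ff s a b x" for x q
  proof (induction q)
    case 0 then show ?case by simp
  next
    case (Suc q)
    have "ff s a b (x + k * Suc q) = ff s a b ((x + k * q) + k)" by (simp add: algebra_simps)
    then show ?case using ff_per[OF assms, of "x + k*q"] Suc by simp
  qed
  show ?thesis using q[of "j mod k" "j div k"] by simp
qed

lemma Mc_entry: "Mc $ r $ w = (if r \<in> set cs \<and> w \<in> set cs then A $ r $ w else 0)"
  by (simp add: Msub_def)

lemma kernel:
  assumes "ff s a b k = a" "ff s a b (Suc k) = b"
  shows "(\<Sum>j<k. ff s a b j *\<^sub>R column (cs ! j) Mc) = 0"
proof -
  let ?f = "ff s a b"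
  have "(\<Sum>j<k. ?f j * Mc $ r $ (cs ! j)) = 0" for r
  proof (cases "r \<in> set cs")
    case False then show ?thesis by (simp add: Mc_entry)
  next
    case True
    then obtain i where i: "i < k" "r = cs ! i" by (auto simp: in_set_conv_nth)
    define a1 where "a1 = (i + 1) mod k"
    define a2 where "a2 = (i + k - 1) mod k"
    have a12: "a1 < k" "a2 < k" unfolding a1_def a2_def by (simp_all add: modk)
    have ne: "a1 \<noteq> a2"
    proof
      assume "a1 = a2"
      then have "(i + k - 1) mod k = (i + 1) mod k" unfolding a1_def a2_def by simp
      then have "k dvd (i + k - 1 - (i + 1))" using k3 by (subst (asm) mod_eq_dvd_iff_nat) (auto simp: cs_ne)
      moreover have "i + k - 1 - (i + 1) = k - 2" using k3 by simp
      ultimately have "k dvd (k - 2)" by simp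
      then have "k \<le> k - 2" using k3 by (intro dvd_imp_le) auto
      then show False using k3 by simp
    qed
    have zero: "?f j * Mc $ r $ (cs ! j) = 0" if j: "j \<in> {..<k}" "j \<noteq> a1" "j \<noteq> a2" for j
    proof (cases "adj D (cs!i) (cs!j)")
      case False then show ?thesis using i by (simp add: skew_nadj Mc_entry)
    next
      case True
      then have "j = (i + 1) mod k \<or> i = (j + 1) mod k" using chord[OF uc cy i(1) _ True og] j by simp
      moreover have "j = a2" if h: "i = (j + 1) mod k"
      proof (cases "j + 1 < k")
        case True then show ?thesis using h unfolding a2_def by simp
      next
        case False then have "j + 1 = k" using j by simp
        then show ?thesis using h unfolding a2_def by simp
      qed
      ultimately show ?thesis using j unfolding a1_def by auto
    qed
    have "(\<Sum>j<k. ?f j * Mc $ r $ (cs ! j)) = ?f a1 * Mc $ r $ (cs ! a1) + ?f a2 * Mc $ r $ (cs ! a2)"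
      by (rule sum2) (use a12 ne zero in auto)
    also have "\<dots> = ?f (i+1) * s i - ?f (i + k - 1) * s (i + k - 1)"
    proof -
      have e1: "Mc $ r $ (cs ! a1) = s i" using i a12 unfolding s_def a1_def by (simp add: Mc_entry)
      have "i + k - 1 + 1 = i + k" using k3 by simp
      then have "(i + k - 1 + 1) mod k = i" using i by simp
      then have m2: "(i + k - 1 + 1) mod k = i" .
      have "Mc $ r $ (cs ! a2) = A $ (cs!i) $ (cs!a2)" using i a12 by (simp add: Mc_entry)
      also have "\<dots> = - A $ (cs!a2) $ (cs!i)" by (rule skew_anti[OF og])
      also have "\<dots> = - s (i + k - 1)" unfolding s_def a2_def using m2 by simp
      finally have e2: "Mc $ r $ (cs ! a2) = - s (i + k - 1)" .
      show ?thesis unfolding e1 e2 using ff_mod[OF assms] unfolding a1_def a2_def by simp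
    qed
    also have "\<dots> = 0"
    proof -
      have "Suc (Suc (i + k - 1)) = (i + 1) + k" using k3 by simp
      then have "?f (i + 1 + k) = s (i + k - 1) * s (Suc (i + k - 1)) * ?f (i + k - 1)"
        by (metis ff.simps(3))
      moreover have "Suc (i + k - 1) = i + k" using k3 by simp
      ultimately have "?f (i + 1) = s (i + k - 1) * s i * ?f (i + k - 1)"
        using ff_per[OF assms, of "Suc i"] s_per(1)[of i] by simp
      then show ?thesis using s_sq[of i] by (simp add: algebra_simps)
    qed
    finally show ?thesis .
  qed
  then show ?thesis by (simp add: vec_eq_iff column_def)
qed

end


context cyc begin

abbreviation "W I \<equiv> (\<lambda>j. column (cs ! j) Mc) ` I"

lemma col_span:
  assumes "ff s a b k = a" "ff s a b (Suc k) = b" "ff s a b t = 1" "t < k"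
    and I: "\<And>j. j < k \<Longrightarrow> j \<noteq> t \<Longrightarrow> ff s a b j \<noteq> 0 \<Longrightarrow> j \<in> I"
  shows "column (cs ! t) Mc \<in> span (W I)"
proof -
  let ?f = "ff s a b" and ?C = "\<lambda>j. column (cs ! j) Mc"
  have "0 = (\<Sum>j<k. ?f j *\<^sub>R ?C j)" using kernel[OF assms(1,2)] by simp
  also have "\<dots> = ?f t *\<^sub>R ?C t + (\<Sum>j\<in>{..<k} - {t}. ?f j *\<^sub>R ?C j)"
    using assms(4) by (subst sum.remove[of _ t]) auto
  finally have "?C t = - (\<Sum>j\<in>{..<k} - {t}. ?f j *\<^sub>R ?C j)" using assms(3)
    by (simp add: eq_neg_iff_add_eq_0 add.commute)
  also have "\<dots> \<in> span (W I)"
  proof (intro span_neg span_sum)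
    fix j assume j: "j \<in> {..<k} - {t}"
    show "?f j *\<^sub>R ?C j \<in> span (W I)"
    proof (cases "?f j = 0")
      case True then show ?thesis by (simp add: span_zero)
    next
      case False then have "j \<in> I" using I j by auto
      then show ?thesis by (intro span_mul span_base) auto
    qed
  qed
  finally show ?thesis .
qed

lemma rank_I:
  assumes "I \<subseteq> {..<k}" "\<And>j. j < k \<Longrightarrow> j \<notin> I \<Longrightarrow> column (cs ! j) Mc \<in> span (W I)"
  shows "rank Mc \<le> card I"
proof -
  have fin: "finite I" using assms(1) finite_subset by blast
  have "columns Mc \<subseteq> span (W I)"
  proof
    fix c assume "c \<in> columns Mc"
    then obtain w where c: "c = column w Mc" by (auto simp: columns_def)
    show "c \<in> span (W I)"
    proof (cases "w \<in> set cs")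
      case False
      then have "c = 0" using c by (simp add: column_def Mc_entry vec_eq_iff)
      then show ?thesis by (simp add: span_zero)
    next
      case True
      then obtain j where j: "j < k" "w = cs ! j" by (auto simp: in_set_conv_nth)
      show ?thesis
      proof (cases "j \<in> I")
        case True then show ?thesis using c j by (intro span_base) auto
      next
        case False then show ?thesis using assms(2) c j by auto
      qed
    qed
  qed
  then have "dim (columns Mc) \<le> card (W I)" using fin by (intro dim_le_card) auto
  also have "\<dots> \<le> card I" using fin by (rule card_image_le)
  finally show ?thesis by (simp add: column_rank_def)
qed

lemma rank_cyc_all: "rank Mc \<le> k"
  using rank_I[of "{..<k}"] by simp

lemma s_sq': "s j * s j = 1" by (rule s_sq)

lemma prod_shift: "(\<Prod>i<k. s (Suc i)) = (\<Prod>i<k. s i)"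
proof -
  have "s 0 * (\<Prod>i<k. s (Suc i)) = (\<Prod>i<Suc k. s i)" by (rule prod.lessThan_Suc_shift[symmetric])
  also have "\<dots> = (\<Prod>i<k. s i) * s 0" using s_per(1)[of 0] by simp
  finally have "s 0 * (s 0 * (\<Prod>i<k. s (Suc i))) = s 0 * ((\<Prod>i<k. s i) * s 0)" by simp
  moreover have "s 0 \<noteq> 0" using s_sq[of 0] by auto
  ultimately show ?thesis by simp
qed

lemma prod_sq: "(\<Prod>i\<in>S. s (g i)) * (\<Prod>i\<in>S. s (g i)) = 1"
  by (simp add: prod.distrib[symmetric] s_sq)

lemma rank_cyc_odd:
  assumes "odd k" shows "rank Mc \<le> k - 1"
proof -
  obtain m where m: "k = 2*m+1" using assms oddE by blast
  define b where "b = (\<Prod>i<2*m. s (Suc i))"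
  have bb: "b * b = 1" unfolding b_def by (rule prod_sq)
  have f0: "ff s 1 b k = 1" using m ff_odd[of s 1 b m] bb by (simp add: b_def)
  have "ff s 1 b (Suc k) = ff s 1 b (2 * Suc m)" using m by simp
  also have "\<dots> = (\<Prod>i<Suc (Suc (2*m)). s i)" by (simp add: ff_even)
  also have "\<dots> = s 0 * (b * s (Suc (2*m)))"
    unfolding prod.lessThan_Suc_shift[of _ "Suc (2*m)"] prod.lessThan_Suc[of _ "2*m"] b_def by (simp add: ac_simps)
  also have "s (Suc (2*m)) = s 0" using s_per(1)[of 0] m by simp
  finally have f1: "ff s 1 b (Suc k) = b" using s_sq[of 0] by (simp add: algebra_simps)
  have k0': "0 < k" by (rule k0)
  have "column (cs ! 0) Mc \<in> span (W {1..<k})"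
    by (rule col_span[OF f0 f1]) (use k0' in auto)
  then have "rank Mc \<le> card {1..<k}" by (intro rank_I) (auto simp: not_less_eq_eq)
  then show ?thesis by simp
qed

lemma rank_cyc_even:
  assumes "even k" and ev: "evenly_oriented D cs" shows "rank Mc \<le> k - 2"
proof -
  obtain m where m: "k = 2*m" using assms evenE by blast
  define P where "P = (\<Prod>i<k. s i)"
  have "P = (\<Prod>i<k. A $ (cs ! i) $ (cs ! ((i + 1) mod k)))"
    unfolding P_def s_def by (rule prod.cong) auto
  then have Ppos: "P > 0" using ev by (simp add: evenly_oriented_def)
  have PP: "P * P = 1" unfolding P_def using prod_sq[where g = id and S="{..<k}"] by simp
  have P1: "P = 1"
  proof -
    have "(P - 1) * (P + 1) = 0" using PP by (simp add: algebra_simps)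
    then show ?thesis using Ppos by auto
  qed
  have Q: "(\<Prod>i<2*m. s (Suc i)) = 1" using prod_shift P1 P_def m by simp
  have f0: "ff s 1 0 k = 1" using m ff_even[of s 1 0 m] P1 P_def by simp
  have f1: "ff s 1 0 (Suc k) = 0" using m ff_odd[of s 1 0 m] by simp
  have g0: "ff s 0 1 k = 0" using m ff_even[of s 0 1 m] by simp
  have g1: "ff s 0 1 (Suc k) = 1" using m ff_odd[of s 0 1 m] Q by simp
  have k3': "3 \<le> k" by (rule k3)
  have c0: "column (cs ! 0) Mc \<in> span (W {2..<k})"
  proof (rule col_span[OF f0 f1])
    fix j assume "j < k" "j \<noteq> 0" "ff s 1 0 j \<noteq> 0"
    then show "j \<in> {2..<k}" by (cases "j = 1") auto
  qed (use k3' in auto)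
  have c1: "column (cs ! 1) Mc \<in> span (W {2..<k})"
  proof (rule col_span[OF g0 g1])
    fix j assume "j < k" "j \<noteq> 1" "ff s 0 1 j \<noteq> 0"
    then show "j \<in> {2..<k}" by (cases "j = 0") auto
  qed (use k3' in auto)
  have "rank Mc \<le> card {2..<k}"
  proof (rule rank_I)
    fix j assume "j < k" "j \<notin> {2..<k}"
    then have "j = 0 \<or> j = 1" by auto
    then show "column (cs ! j) Mc \<in> span (W {2..<k})" using c0 c1 by auto
  qed auto
  then show ?thesis by simp
qed

end
theorem theorem5p1:
  fixes D :: "'n::finite \<Rightarrow> 'n \<Rightarrow> bool" and cs :: "'n list" and n k :: nat
  assumes "oriented_graph D"
    and "unicyclic D"
    and "is_cycle D cs"
    and "n = CARD('n)"
    and "k = length cs"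
    and "k < n"
  shows "(in_U1 D \<longrightarrow>
            (even n \<longrightarrow> sr D \<le> n) \<and> (odd n \<longrightarrow> sr D \<le> n - 1))
       \<and> (in_U2 D cs \<longrightarrow>
            (odd n \<and> odd k \<longrightarrow> sr D \<le> n - 1) \<and>
            (even n \<and> odd k \<longrightarrow> sr D \<le> n - 2) \<and>
            (even n \<and> even k \<and> oddly_oriented D cs \<longrightarrow> sr D \<le> n) \<and>
            (odd n \<and> even k \<and> oddly_oriented D cs \<longrightarrow> sr D \<le> n - 1) \<and>
            (even n \<and> even k \<and> evenly_oriented D cs \<longrightarrow> sr D \<le> n - 2) \<and>
            (odd n \<and> even k \<and> evenly_oriented D cs \<longrightarrow> sr D \<le> n - 3))"
proof -
  interpret cyc D cs using assms(1-3) by unfold_locales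
  have og: "oriented_graph D" by (rule assms(1))
  have dcs: "distinct cs" using assms(3) by (simp add: is_cycle_def)
  have cardcs: "card (set cs) = k" using dcs assms(5) by (simp add: distinct_card)
  have P1: "in_U1 D \<longrightarrow> (even n \<longrightarrow> sr D \<le> n) \<and> (odd n \<longrightarrow> sr D \<le> n - 1)"
  proof
    assume "in_U1 D"
    then obtain V' where st: "(delta_step D)\<^sup>*\<^sup>* UNIV V'" and na: "\<forall>u\<in>V'. \<forall>v\<in>V'. \<not> adj D u v"
      by (auto simp: in_U1_def)
    obtain t where t: "card V' + 2 * t = n" "sr D \<le> rank (Msub D V') + 2 * t"
      using delta_star[OF og st] assms(4) by blast
    have "Msub D V' = 0" using na by (auto simp: Msub_def vec_eq_iff skew_nadj)
    then have "sr D \<le> 2 * t" using t by simp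
    then show "(even n \<longrightarrow> sr D \<le> n) \<and> (odd n \<longrightarrow> sr D \<le> n - 1)" using t(1) by presburger
  qed
  have P2: "in_U2 D cs \<longrightarrow>
            (odd n \<and> odd k \<longrightarrow> sr D \<le> n - 1) \<and>
            (even n \<and> odd k \<longrightarrow> sr D \<le> n - 2) \<and>
            (even n \<and> even k \<and> oddly_oriented D cs \<longrightarrow> sr D \<le> n) \<and>
            (odd n \<and> even k \<and> oddly_oriented D cs \<longrightarrow> sr D \<le> n - 1) \<and>
            (even n \<and> even k \<and> evenly_oriented D cs \<longrightarrow> sr D \<le> n - 2) \<and>
            (odd n \<and> even k \<and> evenly_oriented D cs \<longrightarrow> sr D \<le> n - 3)"
  proof
    assume "in_U2 D cs"
    then obtain V' where st: "(delta_step D)\<^sup>*\<^sup>* UNIV V'" and sub: "set cs \<subseteq> V'"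
      and ed: "\<forall>u\<in>V'. \<forall>v\<in>V'. adj D u v \<longrightarrow> u \<in> set cs \<and> v \<in> set cs"
      by (auto simp: in_U2_def)
    obtain t where t: "card V' + 2 * t = n" "sr D \<le> rank (Msub D V') + 2 * t"
      using delta_star[OF og st] assms(4) by blast
    have "Msub D V' = Mc"
      unfolding Msub_def vec_eq_iff
    proof (intro allI)
      fix i j
      show "(\<chi> i j. if i \<in> V' \<and> j \<in> V' then A $ i $ j else 0) $ i $ j =
            (\<chi> i j. if i \<in> set cs \<and> j \<in> set cs then A $ i $ j else 0) $ i $ j"
        using sub ed skew_nadj[of D i j] by (cases "adj D i j") auto
    qed
    then have sr: "sr D \<le> rank Mc + 2 * t" using t by simp
    have cV: "k \<le> card V'" using cardcs card_mono[OF finite sub] by simp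
    have r1: "rank Mc \<le> k" using rank_cyc_all assms(5) by simp
    have r2: "odd k \<Longrightarrow> rank Mc \<le> k - 1" using rank_cyc_odd assms(5) by simp
    have r3: "even k \<Longrightarrow> evenly_oriented D cs \<Longrightarrow> rank Mc \<le> k - 2" using rank_cyc_even assms(5) by simp
    have k3': "k \<ge> 3" using k3 assms(5) by simp
    show "(odd n \<and> odd k \<longrightarrow> sr D \<le> n - 1) \<and>
            (even n \<and> odd k \<longrightarrow> sr D \<le> n - 2) \<and>
            (even n \<and> even k \<and> oddly_oriented D cs \<longrightarrow> sr D \<le> n) \<and>
            (odd n \<and> even k \<and> oddly_oriented D cs \<longrightarrow> sr D \<le> n - 1) \<and>
            (even n \<and> even k \<and> evenly_oriented D cs \<longrightarrow> sr D \<le> n - 2) \<and>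
            (odd n \<and> even k \<and> evenly_oriented D cs \<longrightarrow> sr D \<le> n - 3)"
    proof (intro conjI impI; elim conjE)
      assume "odd n" "odd k" then show "sr D \<le> n - 1" using sr r2[OF \<open>odd k\<close>] t(1) cV k3' by linarith
    next
      assume "even n" "odd k" then show "sr D \<le> n - 2" using sr r2[OF \<open>odd k\<close>] t(1) cV k3' by presburger
    next
      assume "even n" "even k" then show "sr D \<le> n" using sr r1 t(1) cV by linarith
    next
      assume "odd n" "even k" then show "sr D \<le> n - 1" using sr r1 t(1) cV by presburger
    next
      assume "even n" "even k" "evenly_oriented D cs" then show "sr D \<le> n - 2"
        using sr r3[OF \<open>even k\<close> \<open>evenly_oriented D cs\<close>] t(1) cV k3' by linarith
    next
      assume "odd n" "even k" "evenly_oriented D cs" then show "sr D \<le> n - 3"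
        using sr r3[OF \<open>even k\<close> \<open>evenly_oriented D cs\<close>] t(1) cV k3' by presburger
    qed
  qed
  show ?thesis using P1 P2 by blast
qed

end
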